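(* Let $p\in(1,\infty)$, $X\in\mathfrak A_p$, $\theta\in[0,p)$, $S\in\mathcal{LCR}_\theta(X)$ closed, and $\{\mathfrak m_k\}\in\mathfrak M_\theta(S)$ with parameter $\epsilon\in(0,\frac1{10}]$. For each $\sigma\in(0,1)$ there is $C>0$ such that for all $f\in L^1_{loc}(\{\mathfrak m_k\})$, $$\|f^\sharp\|_{L^p(S,\mu)}+\Big(\sum_{k=1}^\infty\epsilon^{k(\theta-p)}\int_{S_{\epsilon^k}(\sigma)}\mathcal E_{\mathfrak m_k}(f,B_{\epsilon^k}(x))^p\,d\mathfrak m_k(x)\Big)^{1/p}\le C\,\|f^\sharp\|_{L^p(X,\mu)}.$$
   Context: A metric measure space is a triple $X=(X,d,\mu)$ with $(X,d)$ a complete separable metric space and $\mu$ a Borel regular measure with $0<\mu(B)<\infty$ for every ball $B$ and $\operatorname{supp}\mu=X$. All balls are closed: $B_r(x)=\{y:d(x,y)\le r\}$; $r(B)$ is the radius. A measure on $X$ means a nonzero Borel regular locally finite (outer) measure. $\mu$ is uniformly locally doubling if for every $R>0$, $\sup_{r\in(0,R]}\sup_x\mu(B_{2r}(x))/\mu(B_r(x))<\infty$. $\operatorname{lip}f(x)=\limsup_{y\to x}|f(y)-f(x)|/d(x,y)$ at accumulation points and $0$ otherwise. For a measure $\mathfrak m$ and Borel $G$ with $0<\mathfrak m(G)<\infty$, $\mathcal E_{\mathfrak m}(f,G)=\inf_{c\in\mathbb R}\frac1{\mathfrak m(G)}\int_G|f-c|d\mathfrak m$. $X\in\mathfrak A_q$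 if $\mu$ is uniformly locally doubling and for every $R>0$ there are $C>0,\lambda\ge1$ with $\mathcal E_\mu(f,B_r(x))\le Cr(\frac1{\mu(B_{\lambda r}(x))}\int_{B_{\lambda r}(x)}(\operatorname{lip}f)^qd\mu)^{1/q}$ for all Lipschitz $f$, $x$, $r\in(0,R]$. For $\theta\ge0$: $\mathcal H_{\theta,\delta}(E)=\inf\{\sum_i\mu(B_{r_i}(x_i))/r_i^\theta:E\subset\bigcup_iB_{r_i}(x_i),\ r_i<\delta\}$. $S\in\mathcal{LCR}_\theta(X)$ if there is $\lambda>0$ with $\mathcal H_{\theta,r}(B_r(x)\cap S)\ge\lambda\mu(B_r(x))/r^\theta$ for all $x\in S$, $r\in(0,1]$. $\{\mathfrak m_k\}_{k=0}^\infty\in\mathfrak M_\theta(S)$ (parameter $\epsilon$) means: (M1) $\operatorname{supp}\mathfrak m_k=S$; (M2) $\exists C_1$: $\mathfrak m_k(B_r(x))\le C_1\mu(B_r(x))/r^\theta$ for all $k$, $x\in X$, $r\in(0,\epsilon^k]$; (M3) $\exists C_2$: $\mathfrak m_k(B_r(x))\ge C_2\mu(B_r(x))/r^\theta$ for all $k$, $x\in S$, $r\in[\epsilon^k,1]$; (M4) $\mathfrak m_k=w_k\mathfrak m_0$, $w_k\in L^\infty(\mathfrak m_0)$, $\exists C_3$: $\epsilon^{\theta j}/C_3\le w_k/w_{k+j}\le C_3$ $\mathfrak m_0$-a.e. on $S$ for all $k,j$. $L^1_{loc}(\{\mathfrak m_k\})=\bigcap_kL^1_{loc}(\mathfrak m_k)$.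 For $r>0$, $k(r)=\max\{k\in\mathbb Z:r\le\epsilon^k\}$. $\widetilde{\mathcal E}_{\mathfrak m}(f,B_r(x))=\mathcal E_{\mathfrak m}(f,B_{2r}(x))$ if $B_r(x)\cap\operatorname{supp}\mathfrak m\ne\emptyset$, else $0$. $f^\sharp(x)=\sup_{r\in(0,1]}r^{-1}\widetilde{\mathcal E}_{\mathfrak m_{k(r)}}(f,B_r(x))$ for $x\in X$. A ball $B$ is $(S,\sigma)$-porous if there is a ball $B'\subset B\setminus S$ with $r(B')\ge\sigma r(B)$; $S_r(\sigma)=\{x\in S:B_r(x)\text{ is }(S,\sigma)\text{-porous}\}$. *)

theory Defs
  imports "HOL-Analysis.Analysis"
begin

definition epowr :: "ennreal \<Rightarrow> real \<Rightarrow> ennreal" where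
  "epowr x a = (if x = \<infinity> then \<infinity> else ennreal (enn2real x powr a))"

definition mm_space :: "'a::polish_space measure \<Rightarrow> bool" where
  "mm_space \<mu> \<longleftrightarrow> sets \<mu> = sets borel \<and>
     (\<forall>x r. 0 < r \<longrightarrow> 0 < emeasure \<mu> (cball x r) \<and> emeasure \<mu> (cball x r) < \<infinity>)"

definition supp_m :: "'a::metric_space measure \<Rightarrow> 'a set" where
  "supp_m m = {x. \<forall>U. open U \<and> x \<in> U \<longrightarrow> 0 < emeasure m U}"

definition is_measure_on :: "'a::metric_space measure \<Rightarrow> bool" where
  "is_measure_on m \<longleftrightarrow> sets m = sets borel \<and> emeasure m UNIV \<noteq> 0 \<and>
     (\<forall>x. \<exists>U. open U \<and> x \<in> U \<and> emeasure m U < \<infinity>)"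

definition unif_loc_doubling :: "'a::metric_space measure \<Rightarrow> bool" where
  "unif_loc_doubling \<mu> \<longleftrightarrow> (\<forall>R>0. \<exists>D::real. \<forall>r x. 0 < r \<and> r \<le> R \<longrightarrow>
      emeasure \<mu> (cball x (2*r)) \<le> ennreal D * emeasure \<mu> (cball x r))"

definition lip :: "('a::metric_space \<Rightarrow> real) \<Rightarrow> 'a \<Rightarrow> ennreal" where
  "lip f x = (if x islimpt UNIV
     then Limsup (at x) (\<lambda>y. ennreal (\<bar>f y - f x\<bar> / dist x y)) else 0)"

definition osc :: "'a measure \<Rightarrow> ('a \<Rightarrow> real) \<Rightarrow> 'a set \<Rightarrow> ennreal" where
  "osc m f G = (INF c::real. (\<integral>\<^sup>+x\<in>G. ennreal \<bar>f x - c\<bar> \<partial>m) / emeasure m G)"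

definition class_A :: "real \<Rightarrow> 'a::polish_space measure \<Rightarrow> bool" where
  "class_A q \<mu> \<longleftrightarrow> mm_space \<mu> \<and> unif_loc_doubling \<mu> \<and>
     (\<forall>R>0. \<exists>C::real. \<exists>lam::real. C > 0 \<and> lam \<ge> 1 \<and>
        (\<forall>f x r. (\<exists>L. L-lipschitz_on UNIV f) \<and> 0 < r \<and> r \<le> R \<longrightarrow>
           osc \<mu> f (cball x r) \<le> ennreal (C * r) *
             epowr ((\<integral>\<^sup>+y\<in>cball x (lam*r). epowr (lip f y) q \<partial>\<mu>)
                    / emeasure \<mu> (cball x (lam*r))) (1/q)))"

text \<open>Codimension-theta Hausdorff content at scale delta (countable covers by closed balls
  of radii in (0,delta), indexed by a set I of naturals).\<close>
definition Hcont :: "'a::metric_space measure \<Rightarrow> real \<Rightarrow> real \<Rightarrow> 'a set \<Rightarrow> ennreal" where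
  "Hcont \<mu> \<theta> \<delta> E = (INF c \<in> {(I, x, r). (I::nat set, x::nat \<Rightarrow> 'a, r::nat \<Rightarrow> real) = (I, x, r) \<and>
        (\<forall>i\<in>I. 0 < r i \<and> r i < \<delta>) \<and> E \<subseteq> (\<Union>i\<in>I. cball (x i) (r i))}.
      (case c of (I, x, r) \<Rightarrow>
        (\<Sum>i. if i \<in> I then emeasure \<mu> (cball (x i) (r i)) / ennreal (r i powr \<theta>) else 0)))"

definition LCR :: "'a::metric_space measure \<Rightarrow> real \<Rightarrow> 'a set \<Rightarrow> bool" where
  "LCR \<mu> \<theta> S \<longleftrightarrow> (\<exists>lam::real. lam > 0 \<and> (\<forall>x\<in>S. \<forall>r. 0 < r \<and> r \<le> 1 \<longrightarrow>
      Hcont \<mu> \<theta> r (cball x r \<inter> S) \<ge> ennreal lam * emeasure \<mu> (cball x r) / ennreal (r powr \<theta>)))"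

definition M_class :: "'a::metric_space measure \<Rightarrow> real \<Rightarrow> 'a set \<Rightarrow> real \<Rightarrow> (nat \<Rightarrow> 'a measure) \<Rightarrow> bool" where
  "M_class \<mu> \<theta> S \<epsilon> m \<longleftrightarrow>
     (\<forall>k. is_measure_on (m k)) \<and>
     (\<forall>k. supp_m (m k) = S) \<and>
     (\<exists>C1::real. \<forall>k x r. 0 < r \<and> r \<le> \<epsilon> ^ k \<longrightarrow>
        emeasure (m k) (cball x r) \<le> ennreal C1 * emeasure \<mu> (cball x r) / ennreal (r powr \<theta>)) \<and>
     (\<exists>C2::real. C2 > 0 \<and> (\<forall>k. \<forall>x\<in>S. \<forall>r. \<epsilon> ^ k \<le> r \<and> r \<le> 1 \<longrightarrow>
        emeasure (m k) (cball x r) \<ge> ennreal C2 * emeasure \<mu> (cball x r) / ennreal (r powr \<theta>))) \<and>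
     (\<exists>w :: nat \<Rightarrow> 'a \<Rightarrow> real.
        (\<forall>k. w k \<in> borel_measurable borel \<and> (\<forall>x. 0 \<le> w k x) \<and>
             (\<exists>M. AE x in m 0. \<bar>w k x\<bar> \<le> M) \<and>
             m k = density (m 0) (\<lambda>x. ennreal (w k x))) \<and>
        (\<exists>C3::real. C3 > 0 \<and> (\<forall>k j. AE x in m 0. x \<in> S \<longrightarrow>
            0 < w (k + j) x \<and>
            \<epsilon> powr (\<theta> * real j) / C3 \<le> w k x / w (k + j) x \<and>
            w k x / w (k + j) x \<le> C3)))"

definition L1loc :: "(nat \<Rightarrow> 'a::metric_space measure) \<Rightarrow> ('a \<Rightarrow> real) \<Rightarrow> bool" where
  "L1loc m f \<longleftrightarrow> (\<forall>k x r. set_integrable (m k) (cball x r) f)"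

text \<open>k(r) = max {k : r \<le> eps^k}; for r in (0,1] this is a natural number.\<close>
definition kr :: "real \<Rightarrow> real \<Rightarrow> nat" where
  "kr \<epsilon> r = (GREATEST k::nat. r \<le> \<epsilon> ^ k)"

definition osc_t :: "'a::metric_space measure \<Rightarrow> ('a \<Rightarrow> real) \<Rightarrow> 'a \<Rightarrow> real \<Rightarrow> ennreal" where
  "osc_t m f x r = (if cball x r \<inter> supp_m m \<noteq> {} then osc m f (cball x (2*r)) else 0)"

definition sharp :: "real \<Rightarrow> (nat \<Rightarrow> 'a::metric_space measure) \<Rightarrow> ('a \<Rightarrow> real) \<Rightarrow> 'a \<Rightarrow> ennreal" where
  "sharp \<epsilon> m f x = (SUP r \<in> {0<..1}. ennreal (1 / r) * osc_t (m (kr \<epsilon> r)) f x r)"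

definition porous_pts :: "'a::metric_space set \<Rightarrow> real \<Rightarrow> real \<Rightarrow> 'a set" where
  "porous_pts S r \<sigma> = {x \<in> S. \<exists>y s. s > 0 \<and> s \<ge> \<sigma> * r \<and> cball y s \<subseteq> cball x r - S}"

end

theory Submission
  imports Defs
begin

lemma lower_env:
  fixes g :: "'a \<Rightarrow> ennreal"
  assumes fin: "integral\<^sup>N M g < \<infinity>"
  obtains h where "h \<in> borel_measurable M" "\<And>x. h x \<le> g x"
    "integral\<^sup>N M h = integral\<^sup>N M g"
    "\<And>u. u \<in> borel_measurable M \<Longrightarrow> (\<And>x. u x \<le> g x) \<Longrightarrow> AE x in M. u x \<le> h x"
proof -
  let ?A = "integral\<^sup>S M ` {s. simple_function M s \<and> s \<le> g}"
  have ne: "?A \<noteq> {}"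
  proof -
    have "simple_function M (\<lambda>_. 0)" by simp
    moreover have "(\<lambda>_. 0) \<le> g" by (simp add: le_fun_def)
    ultimately show ?thesis by blast
  qed
  from ennreal_Sup_countable_SUP[OF ne] obtain F :: "nat \<Rightarrow> ennreal"
    where F: "range F \<subseteq> ?A" "Sup ?A = Sup (range F)" by blast
  have "\<forall>n. \<exists>s. simple_function M s \<and> s \<le> g \<and> F n = integral\<^sup>S M s"
    using F(1) by blast
  then obtain s where s: "\<And>n. simple_function M (s n)" "\<And>n. s n \<le> g"
    "\<And>n. F n = integral\<^sup>S M (s n)" by metis
  define h where "h = (\<lambda>x. SUP n. s n x)"
  have hm: "h \<in> borel_measurable M" unfolding h_def
    using s(1) by (intro borel_measurable_SUP) (auto intro: borel_measurable_simple_function)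
  have hg: "h x \<le> g x" for x unfolding h_def using s(2) by (auto simp: le_fun_def intro: SUP_least)
  have int1: "integral\<^sup>N M h \<le> integral\<^sup>N M g" using hg by (intro nn_integral_mono) auto
  have "integral\<^sup>N M g = Sup ?A" unfolding nn_integral_def by simp
  also have "\<dots> = (SUP n. F n)" using F(2) by simp
  also have "\<dots> \<le> integral\<^sup>N M h"
  proof (rule SUP_least)
    fix n
    have "F n = integral\<^sup>N M (s n)" using s(1,3) by (simp add: nn_integral_eq_simple_integral)
    also have "\<dots> \<le> integral\<^sup>N M h" unfolding h_def by (intro nn_integral_mono) (auto intro: SUP_upper)
    finally show "F n \<le> integral\<^sup>N M h" .
  qed
  finally have heq: "integral\<^sup>N M h = integral\<^sup>N M g" using int1 by simp
  have maxi: "AE x in M. u x \<le> h x" if um: "u \<in> borel_measurable M" and ug: "\<And>x. u x \<le> g x" for u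
  proof -
    define w where "w = (\<lambda>x. max (u x) (h x))"
    have wm: "w \<in> borel_measurable M" unfolding w_def using um hm by measurable
    have "integral\<^sup>N M w \<le> integral\<^sup>N M g" using ug hg by (intro nn_integral_mono) (auto simp: w_def)
    moreover have "integral\<^sup>N M h \<le> integral\<^sup>N M w" by (intro nn_integral_mono) (auto simp: w_def)
    ultimately have we: "integral\<^sup>N M w = integral\<^sup>N M h" using heq by simp
    have "(\<integral>\<^sup>+ x. w x - h x \<partial>M) = integral\<^sup>N M w - integral\<^sup>N M h"
      using wm hm heq fin by (intro nn_integral_diff) (auto simp: w_def)
    also have "\<dots> = 0" using we heq fin by simp
    finally have "AE x in M. w x - h x = 0"
      using wm hm by (subst nn_integral_0_iff_AE[symmetric]) (auto)
    then show ?thesis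
    proof (rule eventually_mono)
      fix x assume "w x - h x = 0"
      then have "w x \<le> h x" using hg[of x] fin
        by (metis diff_eq_0_iff_ennreal ennreal_minus_eq_0 le_less)
      then show "u x \<le> h x" by (simp add: w_def)
    qed
  qed
  show ?thesis using that hm hg heq maxi by blast
qed

lemma supp_compl_null:
  fixes m :: "'a::polish_space measure"
  assumes "sets m = sets borel"
  shows "emeasure m (- supp_m m) = 0"
proof -
  define F where "F = {U. open U \<and> emeasure m U = 0}"
  have sub: "- supp_m m \<subseteq> \<Union>F"
  proof
    fix x assume "x \<in> - supp_m m"
    then obtain U where "open U" "x \<in> U" "\<not> 0 < emeasure m U" unfolding supp_m_def by auto
    then show "x \<in> \<Union>F" unfolding F_def by (auto simp: not_less)
  qed
  obtain F' where F': "F' \<subseteq> F" "countable F'" "\<Union>F' = \<Union>F"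
    using Lindelof[of F] unfolding F_def by auto
  have opn: "open (\<Union>F)" unfolding F_def by auto
  have meas: "\<Union>F \<in> sets m" using opn assms by simp
  have "\<Union>F' \<in> null_sets m"
    using F' assms unfolding F_def
    by (intro null_sets_UN'[of F' id, simplified]) (auto simp: null_sets_def)
  then have "emeasure m (\<Union>F) = 0" using F' by auto
  then show ?thesis using emeasure_mono[OF sub meas] by simp
qed

lemma sigma_finite_balls:
  fixes M :: "'a::polish_space measure"
  assumes "sets M = sets borel" "r > 0" "\<And>x. emeasure M (cball x r) < \<infinity>"
  shows "sigma_finite_measure M"
proof (rule sigma_finite_measure.intro)
  obtain D :: "'a set" where D: "countable D" "\<And>X. open X \<Longrightarrow> X \<noteq> {} \<Longrightarrow> \<exists>d\<in>D. d \<in> X"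
    using countable_dense_exists by blast
  have cov: "\<Union>((\<lambda>d. cball d r) ` D) = UNIV"
  proof (auto)
    fix x
    obtain d where "d \<in> D" "d \<in> ball x r" using D(2)[of "ball x r"] assms(2) by auto
    then show "\<exists>d\<in>D. dist d x \<le> r" by (intro bexI[of _ d]) (auto simp: dist_commute)
  qed
  show "\<exists>A. countable A \<and> A \<subseteq> sets M \<and> \<Union> A = space M \<and> (\<forall>a\<in>A. emeasure M a \<noteq> \<infinity>)"
    using D(1) cov assms by (intro exI[of _ "(\<lambda>d. cball d r) ` D"])
      (auto simp: sets_eq_imp_space_eq[OF assms(1)] less_top[symmetric])
qed

lemma measurable_ball_measure:
  fixes \<mu> :: "'a::polish_space measure"
  assumes "sigma_finite_measure \<mu>" "sets \<mu> = sets borel"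
  shows "(\<lambda>z. emeasure \<mu> (cball z r)) \<in> borel_measurable borel"
proof -
  have eq: "emeasure \<mu> (cball z r) = (\<integral>\<^sup>+y. indicator {p. dist (fst p) (snd p) \<le> r} (z, y) \<partial>\<mu>)" for z
  proof -
    have "cball z r \<in> sets \<mu>" using assms(2) by simp
    then have "emeasure \<mu> (cball z r) = (\<integral>\<^sup>+y. indicator (cball z r) y \<partial>\<mu>)" by simp
    also have "\<dots> = (\<integral>\<^sup>+y. indicator {p. dist (fst p) (snd p) \<le> r} (z, y) \<partial>\<mu>)"
      by (intro nn_integral_cong) (auto simp: indicator_def)
    finally show ?thesis .
  qed
  have cl: "closed {p :: 'a \<times> 'a. dist (fst p) (snd p) \<le> r}"
    by (intro closed_Collect_le continuous_intros)
  have "(indicator {p :: 'a \<times> 'a. dist (fst p) (snd p) \<le> r} :: _ \<Rightarrow> ennreal) \<in> borel_measurable (borel \<Otimes>\<^sub>M borel)"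
    unfolding borel_prod using cl by (intro borel_measurable_indicator) (auto)
  then have "(\<lambda>(z, y). indicator {p :: 'a \<times> 'a. dist (fst p) (snd p) \<le> r} (z, y) :: ennreal) \<in> borel_measurable (borel \<Otimes>\<^sub>M \<mu>)"
    by (subst measurable_cong_sets[OF sets_pair_measure_cong[OF refl assms(2)] refl]) (simp add: case_prod_beta')
  then show ?thesis unfolding eq
    by (rule sigma_finite_measure.borel_measurable_nn_integral[OF assms(1)])
qed

lemma dbl_iter:
  fixes \<mu> :: "'a::metric_space measure"
  assumes dbl: "\<And>r x. 0 < r \<Longrightarrow> r \<le> 1 \<Longrightarrow> emeasure \<mu> (cball x (2*r)) \<le> ennreal D * emeasure \<mu> (cball x r)"
    and D: "D \<ge> 0"
  shows "0 < \<rho> \<Longrightarrow> \<rho> \<le> 2 \<Longrightarrow> emeasure \<mu> (cball x \<rho>) \<le> ennreal (D ^ n) * emeasure \<mu> (cball x (\<rho> / 2 ^ n))"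
proof (induction n arbitrary: \<rho>)
  case 0
  then show ?case by simp
next
  case (Suc n)
  have "emeasure \<mu> (cball x \<rho>) = emeasure \<mu> (cball x (2 * (\<rho>/2)))" by simp
  also have "\<dots> \<le> ennreal D * emeasure \<mu> (cball x (\<rho>/2))" using Suc.prems by (intro dbl) auto
  also have "\<dots> \<le> ennreal D * (ennreal (D ^ n) * emeasure \<mu> (cball x (\<rho>/2 / 2 ^ n)))"
    using Suc.prems by (intro mult_left_mono Suc.IH) auto
  also have "\<dots> = ennreal (D ^ Suc n) * emeasure \<mu> (cball x (\<rho> / 2 ^ Suc n))"
    using D by (simp add: ennreal_mult mult.assoc field_simps)
  finally show ?case .
qed

lemma osc_compare:
  assumes "A \<subseteq> G" "G \<in> sets m" "A \<in> sets m" "0 < emeasure m A"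
    "emeasure m G \<le> ennreal K * emeasure m A" "emeasure m G < \<infinity>" "K > 0"
  shows "osc m f A \<le> ennreal K * osc m f G"
proof -
  have mGpos: "0 < emeasure m G" using assms(1,2,4) emeasure_mono[of A G m] by auto
  have key: "osc m f A / ennreal K \<le> (\<integral>\<^sup>+x\<in>G. ennreal \<bar>f x - c\<bar> \<partial>m) / emeasure m G" for c
  proof -
    let ?a = "\<integral>\<^sup>+x\<in>A. ennreal \<bar>f x - c\<bar> \<partial>m"
    let ?b = "\<integral>\<^sup>+x\<in>G. ennreal \<bar>f x - c\<bar> \<partial>m"
    have ab: "?a \<le> ?b" using assms(1)
      by (intro nn_integral_mono) (auto simp: indicator_def intro: mult_right_mono)
    have "?b = (?b / emeasure m G) * emeasure m G"
      using mGpos assms(6) by (simp add: ennreal_divide_times)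
    also have "\<dots> \<le> (?b / emeasure m G) * (ennreal K * emeasure m A)"
      using assms(5) by (intro mult_left_mono) auto
    finally have "?a \<le> emeasure m A * (ennreal K * (?b / emeasure m G))"
      using ab by (simp add: ac_simps)
    then have "?a / emeasure m A \<le> ennreal K * (?b / emeasure m G)"
      using assms(4) by (intro divide_le_posI_ennreal) auto
    moreover have "osc m f A \<le> ?a / emeasure m A" unfolding osc_def by (rule INF_lower) auto
    ultimately have "osc m f A \<le> ennreal K * (?b / emeasure m G)" by (rule order_trans[rotated])
    then have "osc m f A / ennreal K \<le> ennreal K * (?b / emeasure m G) / ennreal K"
      by (rule divide_right_mono_ennreal)
    also have "\<dots> = ?b / emeasure m G"
      using ennreal_mult_divide_eq[of "ennreal K" "?b / emeasure m G"] assms(7) by (simp add: mult.commute)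
    finally show ?thesis .
  qed
  have "osc m f A / ennreal K \<le> osc m f G" unfolding osc_def[of m f G]
    by (rule INF_greatest) (use key in auto)
  then have "ennreal K * (osc m f A / ennreal K) \<le> ennreal K * osc m f G" by (rule mult_left_mono) auto
  moreover have "ennreal K * (osc m f A / ennreal K) = osc m f A"
    using ennreal_mult_divide_eq[of "ennreal K" "osc m f A"] assms(7) by (simp add: ennreal_times_divide mult.commute)
  ultimately show ?thesis by simp
qed

lemma epowr_mono:
  assumes "0 < a" "x \<le> y" shows "epowr x a \<le> epowr y a"
proof (cases "y = \<infinity>")
  case True then show ?thesis by (simp add: epowr_def)
next
  case False
  then have "x \<noteq> \<infinity>" using assms(2) by (auto simp: top_unique)
  then show ?thesis using False assms
    by (auto simp: epowr_def intro!: ennreal_leI powr_mono2 enn2real_mono simp: less_top[symmetric])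
qed

lemma epowr_mult:
  assumes "0 < c" "0 < a" shows "epowr (ennreal c * x) a = ennreal (c powr a) * epowr x a"
proof (cases "x = \<infinity>")
  case True then show ?thesis using assms by (simp add: epowr_def ennreal_mult_top)
next
  case False
  then have "ennreal c * x \<noteq> \<infinity>" by (simp add: ennreal_mult_eq_top_iff)
  then show ?thesis using False assms
    by (simp add: epowr_def enn2real_mult powr_mult ennreal_mult[symmetric])
qed

lemma epowr_top[simp]: "epowr \<infinity> a = \<infinity>" by (simp add: epowr_def)

lemma kr_pow:
  assumes "0 < \<epsilon>" "\<epsilon> < 1" shows "kr \<epsilon> (\<epsilon> ^ k) = k"
  unfolding kr_def
proof (rule Greatest_equality)
  show "\<epsilon> ^ k \<le> \<epsilon> ^ k" by simp
  fix y assume "\<epsilon> ^ k \<le> \<epsilon> ^ y"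
  then show "y \<le> k" using assms by (meson not_le power_strict_decreasing)
qed

lemma infdist_geI:
  assumes "A \<noteq> {}" "\<And>a. a \<in> A \<Longrightarrow> d \<le> dist x a"
  shows "d \<le> infdist x A"
  unfolding infdist_def using assms by (auto intro!: cINF_greatest)

lemma count_V:
  fixes \<epsilon> \<sigma> \<delta> :: real
  assumes "0 < \<epsilon>" "\<epsilon> < 1" "0 < \<sigma>" "\<epsilon> ^ (M+1) < \<sigma>/2"
  shows "(\<Sum>k. indicator {k. \<sigma>*\<epsilon>^k/2 \<le> \<delta> \<and> \<delta> \<le> \<epsilon>^k} k :: ennreal) \<le> of_nat (2*M+1)"
proof -
  define T where "T = {k. \<sigma>*\<epsilon>^k/2 \<le> \<delta> \<and> \<delta> \<le> \<epsilon>^k}"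
  have close: "k' - k \<le> M" if "k \<in> T" "k' \<in> T" "k \<le> k'" for k k'
  proof (rule ccontr)
    assume "\<not> k' - k \<le> M"
    then have ge: "M + 1 \<le> k' - k" by simp
    have "\<sigma>*\<epsilon>^k/2 \<le> \<epsilon>^k'" using that unfolding T_def by auto
    also have "\<epsilon>^k' = \<epsilon>^k * \<epsilon>^(k'-k)" using that(3) by (simp add: power_add[symmetric])
    finally have "\<sigma>/2 \<le> \<epsilon>^(k'-k)" using assms(1) by (simp add: field_simps)
    moreover have "\<epsilon>^(k'-k) \<le> \<epsilon>^(M+1)" using ge assms(1,2) by (intro power_decreasing) auto
    ultimately show False using assms(4) by simp
  qed
  show ?thesis
  proof (cases "T = {}")
    case True then show ?thesis unfolding T_def[symmetric] by simp
  next
    case False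
    then obtain k1 where k1: "k1 \<in> T" by auto
    have sub: "T \<subseteq> {k1 - M..k1 + M}"
    proof
      fix k assume "k \<in> T"
      then show "k \<in> {k1 - M..k1 + M}" using close[OF k1 \<open>k \<in> T\<close>] close[OF \<open>k \<in> T\<close> k1]
        by (cases "k1 \<le> k") auto
    qed
    have "(\<Sum>k. indicator T k :: ennreal) = (\<Sum>k\<in>{k1 - M..k1 + M}. indicator T k)"
      using sub by (intro suminf_finite) (auto simp: indicator_def)
    also have "\<dots> \<le> (\<Sum>k\<in>{k1 - M..k1 + M}. 1)" by (intro sum_mono) (auto simp: indicator_def)
    also have "\<dots> = of_nat (card {k1 - M..k1 + M})" by simp
    also have "\<dots> \<le> of_nat (2*M+1)"
    proof -
      have "card {k1 - M..k1 + M} \<le> 2*M+1" by simp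
      then show ?thesis by (rule of_nat_mono)
    qed
    finally show ?thesis unfolding T_def .
  qed
qed

lemma dens_compare:
  fixes m :: "nat \<Rightarrow> 'a::polish_space measure"
  assumes "m k = density (m 0) (\<lambda>x. ennreal (w k x))" "m j = density (m 0) (\<lambda>x. ennreal (w j x))"
    "w k \<in> borel_measurable borel" "w j \<in> borel_measurable borel"
    "AE x in m 0. x \<in> S \<longrightarrow> w k x \<le> L * w j x" "emeasure (m 0) (-S) = 0"
    "sets (m 0) = sets borel" "A \<in> sets borel" "L \<ge> 0" "\<And>x. 0 \<le> w j x" "closed S"
  shows "emeasure (m k) A \<le> ennreal L * emeasure (m j) A"
proof -
  have wk: "(\<lambda>x. ennreal (w k x)) \<in> borel_measurable (m 0)"
    using assms(3) by (subst measurable_cong_sets[OF assms(7) refl]) measurable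
  have wj: "(\<lambda>x. ennreal (w j x)) \<in> borel_measurable (m 0)"
    using assms(4) by (subst measurable_cong_sets[OF assms(7) refl]) measurable
  have A: "A \<in> sets (m 0)" using assms(7,8) by simp
  have "-S \<in> null_sets (m 0)"
    using assms(6,7,11) by (intro null_setsI) auto
  from AE_not_in[OF this] have aeS: "AE x in m 0. x \<in> S" by simp
  have "emeasure (m k) A = (\<integral>\<^sup>+x\<in>A. ennreal (w k x) \<partial>m 0)"
    using assms(1) wk A by (simp add: emeasure_density)
  also have "\<dots> \<le> (\<integral>\<^sup>+x\<in>A. ennreal L * ennreal (w j x) \<partial>m 0)"
  proof (rule nn_integral_mono_AE)
    show "AE x in m 0. ennreal (w k x) * indicator A x \<le> ennreal L * ennreal (w j x) * indicator A x"
      using aeS assms(5)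
    proof eventually_elim
      case (elim x)
      then have "w k x \<le> L * w j x" by auto
      then show ?case using assms(9,10) by (auto simp: indicator_def ennreal_mult[symmetric] intro: ennreal_leI)
    qed
  qed
  also have "\<dots> = ennreal L * (\<integral>\<^sup>+x\<in>A. ennreal (w j x) \<partial>m 0)"
    using wj A by (simp add: nn_integral_cmult mult.assoc)
  also have "\<dots> = ennreal L * emeasure (m j) A"
    using assms(2) wj A by (simp add: emeasure_density)
  finally show ?thesis .
qed

lemma final_combine:
  assumes "A \<le> I" "B \<le> ennreal Kt * I" "Kt > 0" "p > 0"
  shows "epowr A (1/p) + epowr B (1/p) \<le> ennreal (1 + Kt powr (1/p)) * epowr I (1/p)"
proof -
  have "epowr A (1/p) \<le> epowr I (1/p)" using assms by (intro epowr_mono) auto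
  moreover have "epowr B (1/p) \<le> epowr (ennreal Kt * I) (1/p)" using assms by (intro epowr_mono) auto
  moreover have "epowr (ennreal Kt * I) (1/p) = ennreal (Kt powr (1/p)) * epowr I (1/p)"
    using assms by (intro epowr_mult) auto
  ultimately have "epowr A (1/p) + epowr B (1/p) \<le> epowr I (1/p) + ennreal (Kt powr (1/p)) * epowr I (1/p)"
    by (metis add_mono)
  also have "\<dots> = ennreal (1 + Kt powr (1/p)) * epowr I (1/p)"
    by (simp add: ennreal_plus distrib_right)
  finally show ?thesis .
qed

lemma div_helper:
  fixes a J :: ennreal
  assumes "a * ennreal q \<le> ennreal c * J" "q > 0" "c \<ge> 0"
  shows "a \<le> ennreal (c / q) * J"
proof -
  have "a = a * ennreal q / ennreal q" using assms(2) by (simp add: ennreal_mult_divide_eq)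
  also have "\<dots> \<le> ennreal c * J / ennreal q" by (rule divide_right_mono_ennreal[OF assms(1)])
  also have "\<dots> = ennreal (c / q) * J"
    using assms(2,3) by (simp add: ennreal_times_divide[symmetric] divide_ennreal ac_simps)
  finally show ?thesis .
qed

lemma alg1:
  assumes "0 < a" "0 < b" "0 \<le> C"
  shows "ennreal (C * a / b) * (X * ennreal b / ennreal a) = ennreal C * X"
proof -
  have "X * ennreal b / ennreal a = X * ennreal (b / a)"
    using assms by (simp add: ennreal_times_divide[symmetric] divide_ennreal)
  then have "ennreal (C * a / b) * (X * ennreal b / ennreal a) = X * (ennreal (C * a / b) * ennreal (b / a))"
    by (simp add: ac_simps)
  also have "ennreal (C * a / b) * ennreal (b / a) = ennreal C"
    using assms by (simp add: ennreal_mult[symmetric])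
  finally show ?thesis by (simp add: ac_simps)
qed

theorem mainTheorem15:
  fixes \<mu> :: "'a::polish_space measure" and p \<theta> \<epsilon> :: real and S :: "'a set"
    and m :: "nat \<Rightarrow> 'a measure"
  assumes "1 < p" and "class_A p \<mu>" and "0 \<le> \<theta>" and "\<theta> < p"
    and "closed S" and "LCR \<mu> \<theta> S"
    and "0 < \<epsilon>" and "\<epsilon> \<le> 1/10" and "M_class \<mu> \<theta> S \<epsilon> m"
  shows "\<forall>\<sigma>. 0 < \<sigma> \<and> \<sigma> < 1 \<longrightarrow> (\<exists>C::real. C > 0 \<and> (\<forall>f. L1loc m f \<longrightarrow>
     epowr (\<integral>\<^sup>+x\<in>S. epowr (sharp \<epsilon> m f x) p \<partial>\<mu>) (1/p)
     + epowr (\<Sum>k. if k = 0 then 0 else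
          ennreal (\<epsilon> powr (real k * (\<theta> - p))) *
          (\<integral>\<^sup>+x\<in>porous_pts S (\<epsilon> ^ k) \<sigma>. epowr (osc (m k) f (cball x (\<epsilon> ^ k))) p \<partial>(m k))) (1/p)
     \<le> ennreal C * epowr (\<integral>\<^sup>+x. epowr (sharp \<epsilon> m f x) p \<partial>\<mu>) (1/p)))"
proof (intro allI impI)
  fix \<sigma> :: real assume \<sigma>: "0 < \<sigma> \<and> \<sigma> < 1"
  have p0: "0 < p" using assms(1) by simp
  have eps1: "\<epsilon> < 1" using assms(8) by simp
  have setsmu: "sets \<mu> = sets borel"
    and mupos: "\<And>x r. 0 < r \<Longrightarrow> 0 < emeasure \<mu> (cball x r)"
    and mufin: "\<And>x r. 0 < r \<Longrightarrow> emeasure \<mu> (cball x r) < \<infinity>"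
    using assms(2) by (auto simp: class_A_def mm_space_def)
  have "\<exists>D::real. \<forall>r x. 0 < r \<and> r \<le> 1 \<longrightarrow> emeasure \<mu> (cball x (2*r)) \<le> ennreal D * emeasure \<mu> (cball x r)"
    using assms(2) unfolding class_A_def unif_loc_doubling_def by auto
  then obtain D0 :: real where D0: "\<And>r x. 0 < r \<Longrightarrow> r \<le> 1 \<Longrightarrow> emeasure \<mu> (cball x (2*r)) \<le> ennreal D0 * emeasure \<mu> (cball x r)"
    by blast
  define D where "D = max D0 1"
  have D1: "1 \<le> D" by (simp add: D_def)
  have Ddbl: "emeasure \<mu> (cball x (2*r)) \<le> ennreal D * emeasure \<mu> (cball x r)" if "0 < r" "r \<le> 1" for r x
    using D0[OF that, of x] by (rule order_trans) (auto simp: D_def intro!: mult_right_mono ennreal_leI)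
  have mkm: "\<And>k. sets (m k) = sets borel" and supp: "\<And>k. supp_m (m k) = S"
    using assms(9) by (auto simp: M_class_def is_measure_on_def)
  have "\<exists>C10::real. \<forall>k x r. 0 < r \<and> r \<le> \<epsilon> ^ k \<longrightarrow>
        emeasure (m k) (cball x r) \<le> ennreal C10 * emeasure \<mu> (cball x r) / ennreal (r powr \<theta>)"
    using assms(9) unfolding M_class_def by blast
  then obtain C10 :: real where C10': "\<forall>k x r. 0 < r \<and> r \<le> \<epsilon> ^ k \<longrightarrow>
        emeasure (m k) (cball x r) \<le> ennreal C10 * emeasure \<mu> (cball x r) / ennreal (r powr \<theta>)" by blast
  have C10: "\<And>k x r. 0 < r \<Longrightarrow> r \<le> \<epsilon> ^ k \<Longrightarrow>
        emeasure (m k) (cball x r) \<le> ennreal C10 * emeasure \<mu> (cball x r) / ennreal (r powr \<theta>)"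
    using C10' by blast
  have "\<exists>C2::real. C2 > 0 \<and> (\<forall>k. \<forall>x\<in>S. \<forall>r. \<epsilon> ^ k \<le> r \<and> r \<le> 1 \<longrightarrow>
        emeasure (m k) (cball x r) \<ge> ennreal C2 * emeasure \<mu> (cball x r) / ennreal (r powr \<theta>))"
    using assms(9) unfolding M_class_def by blast
  then obtain C2 :: real where C2': "C2 > 0" "\<forall>k. \<forall>x\<in>S. \<forall>r. \<epsilon> ^ k \<le> r \<and> r \<le> 1 \<longrightarrow>
        emeasure (m k) (cball x r) \<ge> ennreal C2 * emeasure \<mu> (cball x r) / ennreal (r powr \<theta>)" by blast
  have C2: "C2 > 0" "\<And>k x r. x \<in> S \<Longrightarrow> \<epsilon> ^ k \<le> r \<Longrightarrow> r \<le> 1 \<Longrightarrow>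
        emeasure (m k) (cball x r) \<ge> ennreal C2 * emeasure \<mu> (cball x r) / ennreal (r powr \<theta>)"
    using C2' by blast+
  have "\<exists>w :: nat \<Rightarrow> 'a \<Rightarrow> real.
        (\<forall>k. w k \<in> borel_measurable borel \<and> (\<forall>x. 0 \<le> w k x) \<and>
             (\<exists>M. AE x in m 0. \<bar>w k x\<bar> \<le> M) \<and>
             m k = density (m 0) (\<lambda>x. ennreal (w k x))) \<and>
        (\<exists>C3::real. C3 > 0 \<and> (\<forall>k j. AE x in m 0. x \<in> S \<longrightarrow>
            0 < w (k + j) x \<and>
            \<epsilon> powr (\<theta> * real j) / C3 \<le> w k x / w (k + j) x \<and>
            w k x / w (k + j) x \<le> C3))"
    using assms(9) unfolding M_class_def by blast
  then obtain w :: "nat \<Rightarrow> 'a \<Rightarrow> real" and C3 :: real where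
    w': "\<forall>k. w k \<in> borel_measurable borel \<and> (\<forall>x. 0 \<le> w k x) \<and>
             (\<exists>M. AE x in m 0. \<bar>w k x\<bar> \<le> M) \<and>
             m k = density (m 0) (\<lambda>x. ennreal (w k x))"
    and C3': "C3 > 0" "\<forall>k j. AE x in m 0. x \<in> S \<longrightarrow>
            0 < w (k + j) x \<and>
            \<epsilon> powr (\<theta> * real j) / C3 \<le> w k x / w (k + j) x \<and>
            w k x / w (k + j) x \<le> C3" by blast
  have w: "\<And>k. w k \<in> borel_measurable borel" "\<And>k x. 0 \<le> w k x"
       "\<And>k. m k = density (m 0) (\<lambda>x. ennreal (w k x))" using w' by blast+
  have C3: "C3 > 0" "\<And>k j. AE x in m 0. x \<in> S \<longrightarrow> 0 < w (k + j) x \<and>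
            \<epsilon> powr (\<theta> * real j) / C3 \<le> w k x / w (k + j) x \<and> w k x / w (k + j) x \<le> C3"
    using C3' by blast+
  define C1 where "C1 = max C10 1"
  have C11: "1 \<le> C1" by (simp add: C1_def)

    define mu where "mu = (\<lambda>x r. enn2real (emeasure \<mu> (cball x r)))"
  have mu_eq: "emeasure \<mu> (cball x r) = ennreal (mu x r)" if "0 < r" for x r
    using mufin[OF that, of x] by (simp add: mu_def less_top ennreal_enn2real)
  have mu_pos: "0 < mu x r" if "0 < r" for x r
    using mupos[OF that, of x] mufin[OF that, of x] unfolding mu_def
    by (simp add: enn2real_positive_iff less_top)
  have mu_mono: "mu x r \<le> mu y r'" if "0 < r" "0 < r'" "cball x r \<subseteq> cball y r'" for x y r r'
  proof -
    have "emeasure \<mu> (cball x r) \<le> emeasure \<mu> (cball y r')"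
      using that setsmu by (intro emeasure_mono) auto
    then show ?thesis unfolding mu_def using mufin[OF that(2), of y]
      by (simp add: enn2real_mono)
  qed
  have mu_dbl: "mu x (2*r) \<le> D * mu x r" if "0 < r" "r \<le> 1" for x r
  proof -
    have "ennreal (mu x (2*r)) \<le> ennreal D * ennreal (mu x r)"
      using Ddbl[OF that, of x] mu_eq[OF that(1)] mu_eq[of "2*r" x] that by simp
    also have "\<dots> = ennreal (D * mu x r)" using D1 mu_pos[OF that(1), of x] by (simp add: ennreal_mult)
    finally show ?thesis using D1 mu_pos[OF that(1), of x] by (simp add: ennreal_le_iff)
  qed
  have mu_iter: "mu x \<rho> \<le> D ^ n * mu x (\<rho> / 2 ^ n)" if "0 < \<rho>" "\<rho> \<le> 2" for x \<rho> n
  proof -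
    have h: "emeasure \<mu> (cball x \<rho>) \<le> ennreal (D^n) * emeasure \<mu> (cball x (\<rho>/2^n))"
      by (rule dbl_iter[of \<mu> D]) (use Ddbl D1 that in auto)
    have "ennreal (mu x \<rho>) \<le> ennreal (D ^ n) * ennreal (mu x (\<rho> / 2 ^ n))"
      using h that mu_eq[of \<rho> x] mu_eq[of "\<rho> / 2 ^ n" x] by simp
    also have "\<dots> = ennreal (D ^ n * mu x (\<rho> / 2 ^ n))"
      using D1 mu_pos[of "\<rho> / 2 ^ n" x] that by (simp add: ennreal_mult)
    finally show ?thesis using D1 mu_pos[of "\<rho> / 2 ^ n" x] that by (simp add: ennreal_le_iff)
  qed
  have C1b: "emeasure (m k) (cball x r) \<le> ennreal (C1 * mu x r / r powr \<theta>)" if "0 < r" "r \<le> \<epsilon> ^ k" for k x r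
  proof -
    have "emeasure (m k) (cball x r) \<le> ennreal C10 * emeasure \<mu> (cball x r) / ennreal (r powr \<theta>)"
      by (rule C10[OF that])
    also have "\<dots> \<le> ennreal C1 * emeasure \<mu> (cball x r) / ennreal (r powr \<theta>)"
      by (intro divide_right_mono_ennreal mult_right_mono) (auto simp: C1_def)
    also have "\<dots> = ennreal (C1 * mu x r / r powr \<theta>)"
      using that C11 mu_pos[OF that(1), of x]
      by (simp add: mu_eq ennreal_mult[symmetric] divide_ennreal)
    finally show ?thesis .
  qed
  have C2b: "emeasure (m k) (cball x r) \<ge> ennreal (C2 * mu x r / r powr \<theta>)"
    if "x \<in> S" "\<epsilon> ^ k \<le> r" "r \<le> 1" for k x r
  proof -
    have r0: "0 < r" using that(2) assms(7) by (meson less_le_trans zero_less_power)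
    have "ennreal (C2 * mu x r / r powr \<theta>) = ennreal C2 * emeasure \<mu> (cball x r) / ennreal (r powr \<theta>)"
      using r0 C2(1) mu_pos[OF r0, of x]
      by (simp add: mu_eq ennreal_mult[symmetric] divide_ennreal)
    also have "\<dots> \<le> emeasure (m k) (cball x r)" by (rule C2(2)[OF that])
    finally show ?thesis .
  qed
  have null0: "emeasure (m 0) (-S) = 0"
    using supp_compl_null[of "m 0"] mkm supp by simp
  define L where "L = C3 / \<epsilon> powr \<theta>"
  have L0: "L > 0" using C3(1) assms(7) by (simp add: L_def)
  have mk_cmp: "emeasure (m k) A \<le> ennreal L * emeasure (m (k-1)) A" if "1 \<le> k" "A \<in> sets borel" for k A
  proof (rule dens_compare[of m k w "k-1" S L A])
    show "AE x in m 0. x \<in> S \<longrightarrow> w k x \<le> L * w (k - 1) x"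
      using C3(2)[of "k-1" 1]
    proof eventually_elim
      case (elim x)
      show ?case
      proof
        assume xS: "x \<in> S"
        have kk: "Suc (k - Suc 0) = k" using that by simp
        from elim xS have pos: "0 < w k x" and le: "\<epsilon> powr \<theta> / C3 \<le> w (k-1) x / w k x"
          by (auto simp: kk)
        have ep: "0 < \<epsilon> powr \<theta>" using assms(7) by simp
        from le pos C3(1) have "\<epsilon> powr \<theta> * w k x \<le> C3 * w (k-1) x"
          by (simp add: field_simps)
        then show "w k x \<le> L * w (k - 1) x" using ep unfolding L_def
          by (simp add: field_simps)
      qed
    qed
  qed (auto intro: w(1) w(2) w(3) less_imp_le simp: null0 mkm that L0 assms(5))
  obtain N :: nat where N: "4/\<sigma> \<le> 2^N"
    using real_arch_pow[of 2 "4/\<sigma>"] by (auto intro: less_imp_le)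
  obtain M :: nat where M: "\<epsilon>^(M+1) < \<sigma>/2"
  proof -
    obtain n where n: "\<epsilon>^n < \<sigma>/2" using real_arch_pow_inv[of "\<sigma>/2" \<epsilon>] \<sigma> eps1 by auto
    have "\<epsilon>^(n+1) \<le> \<epsilon>^n" using assms(7) eps1 by (intro power_decreasing) auto
    then show ?thesis using n that[of n] by linarith
  qed
  define K where "K = L * C1 * D^2 / C2"
  have K0: "K > 0" using L0 C11 D1 C2(1) by (simp add: K_def)
  define K' where "K' = K powr p * D^(N+1)"
  have K'0: "K' > 0" using K0 D1 by (simp add: K'_def)
  define Kt where "Kt = K' * C1 * real (2*M+1)"
  have Kt0: "Kt > 0" using K'0 C11 by (simp add: Kt_def)
  have ratio: "emeasure (m k) (cball z (2*\<epsilon>^k)) \<le> ennreal K * emeasure (m k) (cball x (\<epsilon>^k))"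
    if k1: "1 \<le> k" and xS: "x \<in> S" and dxz: "dist x z \<le> \<epsilon>^k" for k x z
  proof -
    define r where "r = \<epsilon>^k"
    have r0: "0 < r" using assms(7) by (simp add: r_def)
    have rle: "r \<le> \<epsilon>" unfolding r_def using k1 assms(7) eps1 by (metis power_decreasing power_one_right less_imp_le)
    have r1: "r \<le> 1/10" using rle assms(8) by simp
    have ek: "\<epsilon>^k = \<epsilon> * \<epsilon>^(k-1)" using k1 by (metis Suc_diff_le diff_Suc_1 power_Suc)
    have r3: "3*r \<le> \<epsilon>^(k-1)" unfolding r_def ek using assms(7,8)
      by (simp add: mult_right_mono[of "3*\<epsilon>" 1 "\<epsilon>^(k-1)", simplified])
    have "emeasure (m k) (cball z (2*r)) \<le> emeasure (m k) (cball x (3*r))"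
    proof (rule emeasure_mono)
      show "cball z (2*r) \<subseteq> cball x (3*r)"
      proof
        fix y assume "y \<in> cball z (2*r)"
        then show "y \<in> cball x (3*r)" using dxz dist_triangle[of x y z] by (simp add: r_def mem_cball)
      qed
    qed (simp add: mkm)
    also have "\<dots> \<le> ennreal L * emeasure (m (k-1)) (cball x (3*r))"
      by (rule mk_cmp[OF k1]) simp
    also have "\<dots> \<le> ennreal L * ennreal (C1 * mu x (3*r) / (3*r) powr \<theta>)"
      using r0 r3 by (intro mult_left_mono C1b) auto
    also have "\<dots> \<le> ennreal L * ennreal (C1 * (D^2 * mu x r) / r powr \<theta>)"
    proof (intro mult_left_mono ennreal_leI)
      have "mu x (3*r) \<le> mu x (4*r)" using r0 by (intro mu_mono) (auto simp: subset_cball)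
      also have "\<dots> \<le> D^2 * mu x (4*r / 2^2)" using r0 r1 by (intro mu_iter) auto
      finally have a: "mu x (3*r) \<le> D^2 * mu x r" by simp
      have b: "r powr \<theta> \<le> (3*r) powr \<theta>" using r0 assms(3) by (intro powr_mono2) auto
      have "C1 * mu x (3*r) / (3*r) powr \<theta> \<le> C1 * (D^2 * mu x r) / (3*r) powr \<theta>"
        using a C11 r0 by (intro divide_right_mono mult_left_mono) auto
      also have "\<dots> \<le> C1 * (D^2 * mu x r) / r powr \<theta>"
        using b C11 D1 mu_pos[OF r0, of x] r0 by (intro divide_left_mono) auto
      finally show "C1 * mu x (3*r) / (3*r) powr \<theta> \<le> C1 * (D^2 * mu x r) / r powr \<theta>" .
    qed auto
    also have "\<dots> = ennreal K * ennreal (C2 * mu x r / r powr \<theta>)"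
    proof -
      have "L * (C1 * (D^2 * mu x r) / r powr \<theta>) = K * (C2 * mu x r / r powr \<theta>)"
        using C2(1) unfolding K_def by (simp add: field_simps)
      then show ?thesis using L0 K0 C11 D1 C2(1) mu_pos[OF r0, of x] r0
        by (simp add: ennreal_mult[symmetric])
    qed
    also have "\<dots> \<le> ennreal K * emeasure (m k) (cball x r)"
      using xS r1 by (intro mult_left_mono C2b) (auto simp: r_def)
    finally show ?thesis unfolding r_def .
  qed
  show "\<exists>C::real. C > 0 \<and> (\<forall>f. L1loc m f \<longrightarrow>
     epowr (\<integral>\<^sup>+x\<in>S. epowr (sharp \<epsilon> m f x) p \<partial>\<mu>) (1/p)
     + epowr (\<Sum>k. if k = 0 then 0 else
          ennreal (\<epsilon> powr (real k * (\<theta> - p))) *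
          (\<integral>\<^sup>+x\<in>porous_pts S (\<epsilon> ^ k) \<sigma>. epowr (osc (m k) f (cball x (\<epsilon> ^ k))) p \<partial>(m k))) (1/p)
     \<le> ennreal C * epowr (\<integral>\<^sup>+x. epowr (sharp \<epsilon> m f x) p \<partial>\<mu>) (1/p))"
  proof (intro exI[of _ "1 + Kt powr (1/p)"] conjI allI impI)
    show "0 < 1 + Kt powr (1/p)" using Kt0 by (simp add: add_pos_nonneg)
    fix f :: "'a \<Rightarrow> real" assume "L1loc m f"
    define g where "g = (\<lambda>x. epowr (sharp \<epsilon> m f x) p)"
    have A: "(\<integral>\<^sup>+x\<in>S. g x \<partial>\<mu>) \<le> (\<integral>\<^sup>+x. g x \<partial>\<mu>)"
      by (intro nn_integral_mono) (auto simp: indicator_def)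
    have B: "(\<Sum>k. if k = 0 then 0 else
          ennreal (\<epsilon> powr (real k * (\<theta> - p))) *
          (\<integral>\<^sup>+x\<in>porous_pts S (\<epsilon> ^ k) \<sigma>. epowr (osc (m k) f (cball x (\<epsilon> ^ k))) p \<partial>(m k)))
        \<le> ennreal Kt * (\<integral>\<^sup>+x. g x \<partial>\<mu>)"
          proof (cases "(\<integral>\<^sup>+x. g x \<partial>\<mu>) = \<infinity>")
      case True then show ?thesis using Kt0 by (simp add: ennreal_mult_top)
    next
      case False
      then have Ifin: "(\<integral>\<^sup>+x. g x \<partial>\<mu>) < \<infinity>" by (simp add: less_top)
      obtain gs where gs: "gs \<in> borel_measurable \<mu>" "\<And>x. gs x \<le> g x"
          "integral\<^sup>N \<mu> gs = integral\<^sup>N \<mu> g"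
          "\<And>u. u \<in> borel_measurable \<mu> \<Longrightarrow> (\<And>x. u x \<le> g x) \<Longrightarrow> AE x in \<mu>. u x \<le> gs x"
        using lower_env[OF Ifin] by blast
      have gsb: "gs \<in> borel_measurable borel"
        using gs(1) by (simp add: measurable_cong_sets[OF setsmu refl])
      have sfmu: "sigma_finite_measure \<mu>"
        by (rule sigma_finite_balls[OF setsmu, of 1]) (use mufin in auto)
      define V where "V k = {z. \<sigma>*\<epsilon>^k/2 \<le> infdist z S \<and> infdist z S \<le> \<epsilon>^k}" for k
      have Vm: "V k \<in> sets borel" for k
      proof -
        have "closed (V k)" unfolding V_def
          by (intro closed_Collect_conj closed_Collect_le continuous_intros)
        then show ?thesis by simp
      qed
      have perk: "ennreal (\<epsilon> powr (real k * (\<theta> - p))) *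
          (\<integral>\<^sup>+x\<in>porous_pts S (\<epsilon> ^ k) \<sigma>. epowr (osc (m k) f (cball x (\<epsilon> ^ k))) p \<partial>(m k))
          \<le> ennreal (K' * C1) * (\<integral>\<^sup>+z. gs z * indicator (V k) z \<partial>\<mu>)" if "1 \<le> k" for k
              proof -
        obtain r where r_def: "r = \<epsilon>^k" by blast
        have r0: "0 < r" using assms(7) by (simp add: r_def)
        have rle: "r \<le> \<epsilon>" unfolding r_def using that assms(7) eps1
          by (metis power_decreasing power_one_right less_imp_le)
        have r1: "r \<le> 1/10" using rle assms(8) by simp
        have krk: "kr \<epsilon> r = k" unfolding r_def using assms(7) eps1 by (rule kr_pow)
        define c where "c = \<epsilon> powr (real k * (\<theta> - p))"
        have c0: "c > 0" using assms(7) by (simp add: c_def)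
        define U where "U = {z. \<sigma>*r/2 \<le> infdist z S}"
        have Um: "U \<in> sets borel"
        proof -
          have "closed U" unfolding U_def by (intro closed_Collect_le continuous_intros)
          then show ?thesis by simp
        qed
        have VU: "V k = {z. \<sigma>*r/2 \<le> infdist z S \<and> infdist z S \<le> r}" by (simp add: V_def r_def)
        define \<Psi> where "\<Psi> z = indicator U z * gs z * ennreal (r powr \<theta>) / emeasure \<mu> (cball z r)" for z
        define \<Phi> where "\<Phi> x z = indicator (S \<inter> cball z r) x * \<Psi> z" for x z
        have ballm: "(\<lambda>z. emeasure \<mu> (cball z r)) \<in> borel_measurable borel"
          by (rule measurable_ball_measure[OF sfmu setsmu])
        have \<Psi>m: "\<Psi> \<in> borel_measurable borel"
          unfolding \<Psi>_def using gsb Um ballm by measurable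
        have sfm: "sigma_finite_measure (m k)"
        proof (rule sigma_finite_balls[OF mkm r0])
          fix x
          have "emeasure (m k) (cball x r) \<le> ennreal (C1 * mu x r / r powr \<theta>)"
            using r0 by (intro C1b) (auto simp: r_def)
          then show "emeasure (m k) (cball x r) < \<infinity>" by (simp add: le_less_trans)
        qed
        have \<Phi>m: "(\<lambda>(x, z). \<Phi> x z) \<in> borel_measurable (m k \<Otimes>\<^sub>M \<mu>)"
        proof -
          define Q where "Q = (S \<times> UNIV) \<inter> {q :: 'a \<times> 'a. dist (snd q) (fst q) \<le> r}"
          have Qc: "closed Q" unfolding Q_def
            by (intro closed_Int closed_Times assms(5) closed_UNIV closed_Collect_le continuous_intros)
          have eq: "(\<lambda>(x, z). \<Phi> x z) = (\<lambda>q. indicator Q q * \<Psi> (snd q))"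
            by (auto simp: \<Phi>_def Q_def indicator_def fun_eq_iff mem_cball)
          have Qm: "Q \<in> sets (borel \<Otimes>\<^sub>M borel)" unfolding borel_prod using Qc by simp
          have "(\<lambda>q. indicator Q q * \<Psi> (snd q)) \<in> borel_measurable (borel \<Otimes>\<^sub>M borel)"
            using Qm \<Psi>m by measurable
          then show ?thesis unfolding eq
            by (subst measurable_cong_sets[OF sets_pair_measure_cong[OF mkm setsmu] refl])
        qed
        have psf: "pair_sigma_finite (m k) \<mu>" using sfm sfmu by (rule pair_sigma_finite.intro)
        have intxm: "(\<lambda>x. \<integral>\<^sup>+z. \<Phi> x z \<partial>\<mu>) \<in> borel_measurable (m k)"
          using sigma_finite_measure.borel_measurable_nn_integral[OF sfmu \<Phi>m] .
        have pointwise: "epowr (osc (m k) f (cball x r)) p \<le> ennreal (K' / c) * (\<integral>\<^sup>+z. \<Phi> x z \<partial>\<mu>)"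
          if xP: "x \<in> porous_pts S r \<sigma>" for x
                    proof -
            from xP obtain y s where xS: "x \<in> S" and s0: "s > 0" and s\<sigma>: "s \<ge> \<sigma> * r"
                and ysub: "cball y s \<subseteq> cball x r - S"
              unfolding porous_pts_def by blast
            have Sne: "S \<noteq> {}" using xS by auto
            have zin: "dist x z \<le> r" "z \<notin> S" if "dist y z \<le> s" for z
            proof -
              have "z \<in> cball y s" using that by (simp add: mem_cball)
              then have "z \<in> cball x r - S" using ysub by blast
              then show "dist x z \<le> r" "z \<notin> S" by (auto simp: mem_cball)
            qed
            have dxy: "dist x y \<le> r" using zin(1)[of y] s0 by simp
            have posx: "0 < emeasure (m k) (cball x r)"
            proof -
              have "x \<in> supp_m (m k)" using xS supp by simp
              then have "0 < emeasure (m k) (ball x r)" unfolding supp_m_def using r0 by auto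
              also have "\<dots> \<le> emeasure (m k) (cball x r)" using mkm by (intro emeasure_mono) auto
              finally show ?thesis .
            qed
            have finx: "emeasure (m k) (cball x r) < \<infinity>"
            proof -
              have "emeasure (m k) (cball x r) \<le> ennreal (C1 * mu x r / r powr \<theta>)"
                using r0 by (intro C1b) (auto simp: r_def)
              then show ?thesis by (simp add: le_less_trans)
            qed
            define E where "E = (K * r) powr p"
            have E0: "E > 0" using K0 r0 by (simp add: E_def)
            have key: "epowr (osc (m k) f (cball x r)) p \<le> ennreal E * g z" if dyz: "dist y z \<le> s" for z
            proof -
              have dxz: "dist x z \<le> r" using zin dyz by auto
              have rat: "emeasure (m k) (cball z (2*r)) \<le> ennreal K * emeasure (m k) (cball x r)"
                using ratio[OF \<open>1 \<le> k\<close> xS] dxz by (simp add: r_def)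
              have finz: "emeasure (m k) (cball z (2*r)) < \<infinity>"
              proof -
                have "ennreal K * emeasure (m k) (cball x r) < \<infinity>" using finx by (simp add: ennreal_mult_less_top)
                then show ?thesis using rat by (rule le_less_trans[rotated])
              qed
              have o1: "osc (m k) f (cball x r) \<le> ennreal K * osc (m k) f (cball z (2*r))"
              proof (rule osc_compare)
                show "cball x r \<subseteq> cball z (2*r)"
                proof
                  fix q assume "q \<in> cball x r"
                  then show "q \<in> cball z (2*r)" using dxz dist_triangle[of z q x]
                    by (simp add: mem_cball dist_commute)
                qed
              qed (use mkm posx rat K0 finz in auto)
              have o2: "osc (m k) f (cball z (2*r)) \<le> ennreal r * sharp \<epsilon> m f z"
              proof -
                have xin: "x \<in> cball z r \<inter> supp_m (m (kr \<epsilon> r))" using dxz xS supp krk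
                  by (auto simp: dist_commute mem_cball)
                then have "ennreal (1/r) * osc (m k) f (cball z (2*r)) = ennreal (1/r) * osc_t (m (kr \<epsilon> r)) f z r"
                  using krk by (auto simp: osc_t_def)
                also have "\<dots> \<le> sharp \<epsilon> m f z" unfolding sharp_def using r0 r1
                  by (intro SUP_upper) auto
                finally have h: "ennreal (1/r) * osc (m k) f (cball z (2*r)) \<le> sharp \<epsilon> m f z" .
                have "osc (m k) f (cball z (2*r)) = ennreal r * (ennreal (1/r) * osc (m k) f (cball z (2*r)))"
                  using r0 by (simp add: mult.assoc[symmetric] ennreal_mult[symmetric])
                also have "\<dots> \<le> ennreal r * sharp \<epsilon> m f z" by (rule mult_left_mono[OF h]) simp
                finally show ?thesis .
              qed
              have "osc (m k) f (cball x r) \<le> ennreal K * (ennreal r * sharp \<epsilon> m f z)"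
                using o1 mult_left_mono[OF o2, of "ennreal K"] by simp
              also have "\<dots> = ennreal (K*r) * sharp \<epsilon> m f z"
                using K0 r0 by (simp add: ennreal_mult mult.assoc)
              finally have o3: "osc (m k) f (cball x r) \<le> ennreal (K*r) * sharp \<epsilon> m f z" .
              have "epowr (osc (m k) f (cball x r)) p \<le> epowr (ennreal (K*r) * sharp \<epsilon> m f z) p"
                by (rule epowr_mono[OF p0 o3])
              also have "\<dots> = ennreal E * g z" unfolding E_def g_def using K0 r0 p0
                by (intro epowr_mult) auto
              finally show ?thesis .
            qed
            define c0 where "c0 = epowr (osc (m k) f (cball x r)) p / ennreal E"
            define u where "u z = c0 * indicator (cball y (s/2)) z" for z
            have um: "u \<in> borel_measurable \<mu>" unfolding u_def
              by (intro borel_measurable_times_ennreal borel_measurable_const borel_measurable_indicator)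
                (simp add: setsmu)
            have ug: "u z \<le> g z" for z
            proof (cases "z \<in> cball y (s/2)")
              case True
              then have "dist y z \<le> s" using s0 by (simp add: mem_cball)
              then have "epowr (osc (m k) f (cball x r)) p \<le> ennreal E * g z" by (rule key)
              then have "c0 \<le> g z" unfolding c0_def using E0 by (intro divide_le_posI_ennreal) auto
              then show ?thesis using True by (simp add: u_def)
            next
              case False then show ?thesis by (simp add: u_def)
            qed
            have aeu: "AE z in \<mu>. u z \<le> gs z" by (rule gs(4)[OF um ug])
            define J where "J = (\<integral>\<^sup>+z. gs z * indicator (cball x r \<inter> U) z \<partial>\<mu>)"
            have inU: "z \<in> cball x r \<inter> U" if "z \<in> cball y (s/2)" for z
            proof -
              have dyz: "dist y z \<le> s/2" using that by (simp add: mem_cball)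
              have "z \<in> cball x r" using zin[of z] dyz s0 by (simp add: mem_cball)
              moreover have "\<sigma>*r/2 \<le> infdist z S"
              proof -
                have "s/2 \<le> infdist z S"
                proof (rule infdist_geI[OF Sne])
                  fix t assume tS: "t \<in> S"
                  have "t \<notin> cball y s" using ysub tS by auto
                  then have "s < dist y t" by (simp add: mem_cball)
                  moreover have "dist y t \<le> dist y z + dist z t" by (rule dist_triangle)
                  ultimately show "s/2 \<le> dist z t" using dyz by simp
                qed
                then show ?thesis using s\<sigma> by simp
              qed
              ultimately show ?thesis by (simp add: U_def)
            qed
            have a1: "c0 * emeasure \<mu> (cball y (s/2)) \<le> J"
            proof -
              have "c0 * emeasure \<mu> (cball y (s/2)) = (\<integral>\<^sup>+z. u z \<partial>\<mu>)"
                unfolding u_def using setsmu by (simp add: nn_integral_cmult_indicator)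
              also have "\<dots> \<le> J" unfolding J_def
              proof (rule nn_integral_mono_AE)
                show "AE z in \<mu>. u z \<le> gs z * indicator (cball x r \<inter> U) z"
                  using aeu
                proof eventually_elim
                  case (elim z)
                  show ?case
                  proof (cases "z \<in> cball y (s/2)")
                    case True then show ?thesis using elim inU[OF True] by (simp add: indicator_def)
                  next
                    case False then show ?thesis by (simp add: u_def)
                  qed
                qed
              qed
              finally show ?thesis .
            qed
            have b1: "mu x r \<le> D^N * mu y (s/2)"
            proof -
              have "mu x r \<le> mu y (2*r)"
              proof (rule mu_mono)
                show "cball x r \<subseteq> cball y (2*r)"
                proof
                  fix q assume "q \<in> cball x r"
                  then show "q \<in> cball y (2*r)" using dxy dist_triangle[of y q x]
                    by (simp add: mem_cball dist_commute)
                qed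
              qed (use r0 in auto)
              also have "\<dots> \<le> D^N * mu y (2*r/2^N)" using r0 r1 by (intro mu_iter) auto
              also have "\<dots> \<le> D^N * mu y (s/2)"
              proof (intro mult_left_mono mu_mono)
                have "2*r = (\<sigma>*r/2) * (4/\<sigma>)" using \<sigma> by (simp add: field_simps)
                also have "\<dots> \<le> (s/2) * 2^N" using s\<sigma> N \<sigma> r0 s0
                  by (intro mult_mono) auto
                finally have "2*r/2^N \<le> s/2" by (simp add: field_simps)
                then show "cball y (2*r/2^N) \<subseteq> cball y (s/2)" by (simp add: subset_cball)
              qed (use r0 D1 s0 in auto)
              finally show ?thesis .
            qed
            have aeq: "epowr (osc (m k) f (cball x r)) p = ennreal E * c0"
              unfolding c0_def using E0
              using ennreal_mult_divide_eq[of "ennreal E" "epowr (osc (m k) f (cball x r)) p"]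
              by (simp add: ennreal_times_divide mult.commute)
            have c1: "epowr (osc (m k) f (cball x r)) p * ennreal (mu x r) \<le> ennreal (E * D^N) * J"
            proof -
              have "epowr (osc (m k) f (cball x r)) p * ennreal (mu x r) = ennreal E * (c0 * ennreal (mu x r))"
                by (simp add: aeq mult.assoc)
              also have "\<dots> \<le> ennreal E * (c0 * ennreal (D^N * mu y (s/2)))"
                by (intro mult_left_mono ennreal_leI b1) auto
              also have "\<dots> = ennreal (E * D^N) * (c0 * emeasure \<mu> (cball y (s/2)))"
                using E0 D1 mu_eq[of "s/2" y] s0 mu_pos[of "s/2" y]
                by (simp add: ennreal_mult ac_simps)
              also have "\<dots> \<le> ennreal (E * D^N) * J" by (rule mult_left_mono[OF a1]) simp
              finally show ?thesis .
            qed
            have d1: "epowr (osc (m k) f (cball x r)) p \<le> ennreal (E * D^N / mu x r) * J"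
              by (rule div_helper[OF c1]) (use mu_pos[OF r0, of x] E0 D1 in auto)
            have e1: "ennreal (r powr \<theta> / (D * mu x r)) * J \<le> (\<integral>\<^sup>+z. \<Phi> x z \<partial>\<mu>)"
            proof -
              have "ennreal (r powr \<theta> / (D * mu x r)) * J
                  = (\<integral>\<^sup>+z. ennreal (r powr \<theta> / (D * mu x r)) * (gs z * indicator (cball x r \<inter> U) z) \<partial>\<mu>)"
                unfolding J_def
                by (intro nn_integral_cmult[symmetric] borel_measurable_times_ennreal gs(1) borel_measurable_indicator)
                  (use Um setsmu in auto)
              also have "\<dots> \<le> (\<integral>\<^sup>+z. \<Phi> x z \<partial>\<mu>)"
              proof (intro nn_integral_mono)
                fix z
                show "ennreal (r powr \<theta> / (D * mu x r)) * (gs z * indicator (cball x r \<inter> U) z) \<le> \<Phi> x z"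
                proof (cases "z \<in> cball x r \<inter> U")
                  case False then show ?thesis by simp
                next
                  case True
                  then have dxz: "dist x z \<le> r" and zU: "z \<in> U" by (auto simp: mem_cball)
                  have \<Phi>z: "\<Phi> x z = gs z * ennreal (r powr \<theta> / mu z r)"
                  proof -
                    have "x \<in> S \<inter> cball z r" using xS dxz by (simp add: mem_cball dist_commute)
                    then have "\<Phi> x z = gs z * ennreal (r powr \<theta>) / ennreal (mu z r)"
                      using zU mu_eq[OF r0, of z] by (simp add: \<Phi>_def \<Psi>_def)
                    also have "\<dots> = gs z * ennreal (r powr \<theta> / mu z r)"
                      using mu_pos[OF r0, of z] r0
                      by (simp add: ennreal_times_divide[symmetric] divide_ennreal)
                    finally show ?thesis .
                  qed
                  have mzr: "mu z r \<le> D * mu x r"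
                  proof -
                    have "mu z r \<le> mu x (2*r)"
                    proof (rule mu_mono)
                      show "cball z r \<subseteq> cball x (2*r)"
                      proof
                        fix q assume "q \<in> cball z r"
                        then show "q \<in> cball x (2*r)" using dxz dist_triangle[of x q z]
                          by (simp add: mem_cball dist_commute)
                      qed
                    qed (use r0 in auto)
                    also have "\<dots> \<le> D * mu x r" using r0 r1 by (intro mu_dbl) auto
                    finally show ?thesis .
                  qed
                  have "r powr \<theta> / (D * mu x r) \<le> r powr \<theta> / mu z r"
                    using mzr mu_pos[OF r0, of z] r0 by (intro divide_left_mono) auto
                  then have "ennreal (r powr \<theta> / (D * mu x r)) \<le> ennreal (r powr \<theta> / mu z r)"
                    by (rule ennreal_leI)
                  then show ?thesis using True \<Phi>z by (simp add: mult.commute mult_left_mono)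
                qed
              qed
              finally show ?thesis .
            qed
            have eqK: "E * D^(N+1) / r powr \<theta> = K' / c"
            proof -
              have "c = (\<epsilon> powr real k) powr (\<theta> - p)" unfolding c_def by (simp add: powr_powr)
              also have "\<dots> = r powr (\<theta> - p)" using assms(7) by (simp add: powr_realpow r_def)
              also have "\<dots> = r powr \<theta> / r powr p" by (rule powr_diff)
              finally have cc: "c = r powr \<theta> / r powr p" .
              have "0 < r powr \<theta>" "0 < r powr p" using r0 by auto
              then show ?thesis unfolding K'_def E_def cc using K0 r0 by (simp add: powr_mult field_simps)
            qed
            have "epowr (osc (m k) f (cball x r)) p \<le> ennreal (E * D^N / mu x r) * J" by (rule d1)
            also have "\<dots> = ennreal (K' / c) * (ennreal (r powr \<theta> / (D * mu x r)) * J)"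
            proof -
              have "E * D^N / mu x r = E * D^(N+1) / r powr \<theta> * (r powr \<theta> / (D * mu x r))"
                using D1 r0 mu_pos[OF r0, of x] by (simp add: field_simps)
              then have "ennreal (E * D^N / mu x r) = ennreal (K' / c) * ennreal (r powr \<theta> / (D * mu x r))"
                unfolding eqK[symmetric] using E0 D1 r0 mu_pos[OF r0, of x]
                by (simp add: ennreal_mult[symmetric])
              then show ?thesis by (simp add: mult.assoc)
            qed
            also have "\<dots> \<le> ennreal (K' / c) * (\<integral>\<^sup>+z. \<Phi> x z \<partial>\<mu>)" by (rule mult_left_mono[OF e1]) simp
            finally show ?thesis .
          qed

        have inner: "(\<integral>\<^sup>+x. \<Phi> x z \<partial>m k) \<le> ennreal C1 * (gs z * indicator (V k) z)" for z
                  proof -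
          have Sc: "closed (S \<inter> cball z r)" using assms(5) by auto
          then have Sm: "S \<inter> cball z r \<in> sets (m k)" using mkm by simp
          have "(\<integral>\<^sup>+x. \<Phi> x z \<partial>m k) = (\<integral>\<^sup>+x. indicator (S \<inter> cball z r) x \<partial>m k) * \<Psi> z"
            unfolding \<Phi>_def using Sm by (intro nn_integral_multc) simp
          also have "\<dots> = emeasure (m k) (S \<inter> cball z r) * \<Psi> z" using Sm by simp
          also have "\<dots> \<le> ennreal C1 * (gs z * indicator (V k) z)"
          proof (cases "S \<inter> cball z r = {} \<or> z \<notin> U")
            case True then show ?thesis by (auto simp: \<Psi>_def)
          next
            case False
            then obtain t where t: "t \<in> S" "dist z t \<le> r" and zU: "z \<in> U" by (auto simp: mem_cball)
            have zV: "z \<in> V k" using zU infdist_le2[OF t(1) t(2)] unfolding VU U_def by auto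
            have "emeasure (m k) (S \<inter> cball z r) \<le> emeasure (m k) (cball z r)"
              using mkm by (intro emeasure_mono) auto
            also have "\<dots> \<le> ennreal (C1 * mu z r / r powr \<theta>)"
              using r0 by (intro C1b) (auto simp: r_def)
            finally have e1: "emeasure (m k) (S \<inter> cball z r) \<le> ennreal (C1 * mu z r / r powr \<theta>)" .
            have \<Psi>z: "\<Psi> z = gs z * ennreal (r powr \<theta>) / ennreal (mu z r)"
              using zU mu_eq[OF r0, of z] by (simp add: \<Psi>_def)
            have "emeasure (m k) (S \<inter> cball z r) * \<Psi> z
                \<le> ennreal (C1 * mu z r / r powr \<theta>) * (gs z * ennreal (r powr \<theta>) / ennreal (mu z r))"
              unfolding \<Psi>z by (rule mult_right_mono[OF e1]) simp
            also have "\<dots> = ennreal C1 * gs z"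
              using mu_pos[OF r0, of z] r0 C11 by (intro alg1) auto
            finally show ?thesis using zV by simp
          qed
          finally show ?thesis .
        qed

        have fub: "(\<integral>\<^sup>+x. (\<integral>\<^sup>+z. \<Phi> x z \<partial>\<mu>) \<partial>m k) = (\<integral>\<^sup>+z. (\<integral>\<^sup>+x. \<Phi> x z \<partial>m k) \<partial>\<mu>)"
          by (rule pair_sigma_finite.Fubini'[OF psf \<Phi>m, symmetric])
        also have "\<dots> \<le> (\<integral>\<^sup>+z. ennreal C1 * (gs z * indicator (V k) z) \<partial>\<mu>)"
          by (intro nn_integral_mono inner)
        also have "\<dots> = ennreal C1 * (\<integral>\<^sup>+z. gs z * indicator (V k) z \<partial>\<mu>)"
          using gs(1) Vm setsmu by (intro nn_integral_cmult) auto
        finally have X: "(\<integral>\<^sup>+x. (\<integral>\<^sup>+z. \<Phi> x z \<partial>\<mu>) \<partial>m k) \<le> ennreal C1 * (\<integral>\<^sup>+z. gs z * indicator (V k) z \<partial>\<mu>)" .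
        have "(\<integral>\<^sup>+x\<in>porous_pts S r \<sigma>. epowr (osc (m k) f (cball x r)) p \<partial>(m k))
            \<le> (\<integral>\<^sup>+x. ennreal (K' / c) * (\<integral>\<^sup>+z. \<Phi> x z \<partial>\<mu>) \<partial>m k)"
          by (intro nn_integral_mono) (auto simp: indicator_def pointwise)
        also have "\<dots> = ennreal (K' / c) * (\<integral>\<^sup>+x. (\<integral>\<^sup>+z. \<Phi> x z \<partial>\<mu>) \<partial>m k)"
          using intxm by (rule nn_integral_cmult)
        also have "\<dots> \<le> ennreal (K' / c) * (ennreal C1 * (\<integral>\<^sup>+z. gs z * indicator (V k) z \<partial>\<mu>))"
          by (rule mult_left_mono[OF X]) simp
        finally have main: "(\<integral>\<^sup>+x\<in>porous_pts S r \<sigma>. epowr (osc (m k) f (cball x r)) p \<partial>(m k))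
            \<le> ennreal (K' / c) * (ennreal C1 * (\<integral>\<^sup>+z. gs z * indicator (V k) z \<partial>\<mu>))" .
        have "ennreal c * (\<integral>\<^sup>+x\<in>porous_pts S r \<sigma>. epowr (osc (m k) f (cball x r)) p \<partial>(m k))
            \<le> ennreal c * (ennreal (K' / c) * (ennreal C1 * (\<integral>\<^sup>+z. gs z * indicator (V k) z \<partial>\<mu>)))"
          by (rule mult_left_mono[OF main]) simp
        also have "\<dots> = ennreal (K' * C1) * (\<integral>\<^sup>+z. gs z * indicator (V k) z \<partial>\<mu>)"
        proof -
          have "ennreal c * (ennreal (K' / c) * ennreal C1) = ennreal (K' * C1)"
            using c0 K'0 C11 by (simp add: ennreal_mult[symmetric])
          then show ?thesis by (metis mult.assoc)
        qed
        finally show ?thesis unfolding c_def r_def .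
      qed

      have "(\<Sum>k. (\<integral>\<^sup>+z. gs z * indicator (V k) z \<partial>\<mu>)) = (\<integral>\<^sup>+z. (\<Sum>k. gs z * indicator (V k) z) \<partial>\<mu>)"
        by (rule nn_integral_suminf[symmetric]) (use gs(1) Vm setsmu in auto)
      also have "\<dots> = (\<integral>\<^sup>+z. gs z * (\<Sum>k. indicator (V k) z) \<partial>\<mu>)"
        by (simp add: ennreal_suminf_cmult)
      also have "\<dots> \<le> (\<integral>\<^sup>+z. gs z * of_nat (2*M+1) \<partial>\<mu>)"
      proof (intro nn_integral_mono mult_left_mono)
        fix z
        have "(\<Sum>k. indicator (V k) z :: ennreal) = (\<Sum>k. indicator {k. \<sigma>*\<epsilon>^k/2 \<le> infdist z S \<and> infdist z S \<le> \<epsilon>^k} k)"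
          by (simp add: V_def indicator_def)
        also have "\<dots> \<le> of_nat (2*M+1)"
          by (rule count_V) (use assms(7) eps1 \<sigma> M in auto)
        finally show "(\<Sum>k. indicator (V k) z :: ennreal) \<le> of_nat (2*M+1)" .
      qed auto
      also have "\<dots> = of_nat (2*M+1) * (\<integral>\<^sup>+z. g z \<partial>\<mu>)"
        using gs(1,3) by (simp add: nn_integral_multc mult.commute)
      finally have inner: "(\<Sum>k. (\<integral>\<^sup>+z. gs z * indicator (V k) z \<partial>\<mu>)) \<le> of_nat (2*M+1) * (\<integral>\<^sup>+z. g z \<partial>\<mu>)" .
      have "(\<Sum>k. if k = 0 then 0 else
          ennreal (\<epsilon> powr (real k * (\<theta> - p))) *
          (\<integral>\<^sup>+x\<in>porous_pts S (\<epsilon> ^ k) \<sigma>. epowr (osc (m k) f (cball x (\<epsilon> ^ k))) p \<partial>(m k)))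
        \<le> (\<Sum>k. ennreal (K' * C1) * (\<integral>\<^sup>+z. gs z * indicator (V k) z \<partial>\<mu>))"
        by (intro suminf_le summableI) (auto intro: perk)
      also have "\<dots> = ennreal (K' * C1) * (\<Sum>k. (\<integral>\<^sup>+z. gs z * indicator (V k) z \<partial>\<mu>))"
        by (rule ennreal_suminf_cmult)
      also have "\<dots> \<le> ennreal (K' * C1) * (of_nat (2*M+1) * (\<integral>\<^sup>+z. g z \<partial>\<mu>))"
        by (rule mult_left_mono[OF inner]) simp
      also have "ennreal (K' * C1) * (of_nat (2*M+1) * (\<integral>\<^sup>+z. g z \<partial>\<mu>)) = ennreal Kt * (\<integral>\<^sup>+z. g z \<partial>\<mu>)"
      proof -
        have "ennreal Kt = ennreal (K' * C1) * of_nat (2*M+1)"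
          unfolding Kt_def using K'0 C11
          by (simp add: ennreal_mult ennreal_of_nat_eq_real_of_nat del: of_nat_add of_nat_mult)
        then show ?thesis by (simp add: mult.assoc del: of_nat_add of_nat_mult)
      qed
      finally show ?thesis .
    qed

    show "epowr (\<integral>\<^sup>+x\<in>S. epowr (sharp \<epsilon> m f x) p \<partial>\<mu>) (1/p)
     + epowr (\<Sum>k. if k = 0 then 0 else
          ennreal (\<epsilon> powr (real k * (\<theta> - p))) *
          (\<integral>\<^sup>+x\<in>porous_pts S (\<epsilon> ^ k) \<sigma>. epowr (osc (m k) f (cball x (\<epsilon> ^ k))) p \<partial>(m k))) (1/p)
     \<le> ennreal (1 + Kt powr (1/p)) * epowr (\<integral>\<^sup>+x. epowr (sharp \<epsilon> m f x) p \<partial>\<mu>) (1/p)"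
      using final_combine[OF A B Kt0 p0] unfolding g_def .
  qed
qed


end
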